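(* Let $\mathcal{D}$ be an algebra and vector lattice of bounded real functions with the Stone property, and $(\mathcal{E},\mathcal{D})$ a bilinear form such that $(\mathcal{E},\mathcal{D}_0)$ has zero killing and all functionals $L_f(h):=2\mathcal{E}(fh,f)-\mathcal{E}(f^2,h)$, $f\in\mathcal{D}_0$, are positive on $\mathcal{D}$. Then $\mathcal{E}(f)=\frac12\|L_f\|_{\mathcal{D}'}$ for every $f\in\mathcal{D}_0$.
   Context: $\|L\|_{\mathcal{D}'}=\sup\{|L(h)|:h\in\mathcal{D},\|h\|_{\sup}\le1\}$. Stone property: $f\wedge1\in\mathcal{D}$. Bilinear form: symmetric nonnegative definite bilinear, $\mathcal{E}(f)=\mathcal{E}(f,f)$. For $f\ge0$ in $\mathcal{D}$, $E_f:=\{\varphi\in\mathcal{D}:\mathbf 1_{\{f>0\}}\le\varphi\le\mathbf 1\}$; $\mathcal{D}_0^+=\{f\ge0:E_f\ne\emptyset\}$, $\mathcal{D}_0=\mathrm{span}\,\mathcal{D}_0^+$. $(\mathcal{E},\mathcal{D}_0)$ has zero killing if $\inf\{\mathcal{E}(f,\varphi):\varphi\in E_f\}=0$ for all $f\in\mathcal{D}_0^+$. A functional is positive if it is nonnegative on nonnegative functions. *)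

theory Defs
  imports "HOL-Analysis.Analysis"
begin

definition bounded_fun :: "('a \<Rightarrow> real) \<Rightarrow> bool" where
  "bounded_fun f \<longleftrightarrow> (\<exists>B. \<forall>x. \<bar>f x\<bar> \<le> B)"

definition algebra_lattice :: "('a \<Rightarrow> real) set \<Rightarrow> bool" where
  "algebra_lattice D \<longleftrightarrow>
     (\<forall>f\<in>D. bounded_fun f) \<and>
     (\<lambda>x. 0) \<in> D \<and>
     (\<forall>f\<in>D. \<forall>g\<in>D. (\<lambda>x. f x + g x) \<in> D) \<and>
     (\<forall>f\<in>D. \<forall>c::real. (\<lambda>x. c * f x) \<in> D) \<and>
     (\<forall>f\<in>D. \<forall>g\<in>D. (\<lambda>x. f x * g x) \<in> D) \<and>
     (\<forall>f\<in>D. \<forall>g\<in>D. (\<lambda>x. max (f x) (g x)) \<in> D) \<and>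
     (\<forall>f\<in>D. \<forall>g\<in>D. (\<lambda>x. min (f x) (g x)) \<in> D)"

definition stone_property :: "('a \<Rightarrow> real) set \<Rightarrow> bool" where
  "stone_property D \<longleftrightarrow> (\<forall>f\<in>D. (\<lambda>x. min (f x) 1) \<in> D)"

definition bilinear_form :: "(('a \<Rightarrow> real) \<Rightarrow> ('a \<Rightarrow> real) \<Rightarrow> real) \<Rightarrow> ('a \<Rightarrow> real) set \<Rightarrow> bool" where
  "bilinear_form E D \<longleftrightarrow>
     (\<forall>f\<in>D. \<forall>g\<in>D. E f g = E g f) \<and>
     (\<forall>f\<in>D. \<forall>g\<in>D. \<forall>h\<in>D. \<forall>a b::real.
        E (\<lambda>x. a * f x + b * g x) h = a * E f h + b * E g h) \<and>
     (\<forall>f\<in>D. E f f \<ge> 0)"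

definition E_set :: "('a \<Rightarrow> real) set \<Rightarrow> ('a \<Rightarrow> real) \<Rightarrow> ('a \<Rightarrow> real) set" where
  "E_set D f = {\<phi>\<in>D. \<forall>x. (if f x > 0 then 1 else 0) \<le> \<phi> x \<and> \<phi> x \<le> 1}"

definition D0plus :: "('a \<Rightarrow> real) set \<Rightarrow> ('a \<Rightarrow> real) set" where
  "D0plus D = {f\<in>D. (\<forall>x. f x \<ge> 0) \<and> E_set D f \<noteq> {}}"

definition D0 :: "('a \<Rightarrow> real) set \<Rightarrow> ('a \<Rightarrow> real) set" where
  "D0 D = {f. \<exists>n::nat. \<exists>c::nat \<Rightarrow> real. \<exists>g::nat \<Rightarrow> ('a \<Rightarrow> real).
              (\<forall>i<n. g i \<in> D0plus D) \<and> f = (\<lambda>x. \<Sum>i<n. c i * g i x)}"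

definition zero_killing :: "(('a \<Rightarrow> real) \<Rightarrow> ('a \<Rightarrow> real) \<Rightarrow> real) \<Rightarrow> ('a \<Rightarrow> real) set \<Rightarrow> bool" where
  "zero_killing E D \<longleftrightarrow> (\<forall>f\<in>D0plus D. (INF \<phi>\<in>E_set D f. ereal (E f \<phi>)) = 0)"

definition positive_functional :: "(('a \<Rightarrow> real) \<Rightarrow> real) \<Rightarrow> ('a \<Rightarrow> real) set \<Rightarrow> bool" where
  "positive_functional L D \<longleftrightarrow> (\<forall>h\<in>D. (\<forall>x. h x \<ge> 0) \<longrightarrow> L h \<ge> 0)"

text \<open>Dual norm (extended-real valued, so unboundedness is not hidden).\<close>
definition dual_norm :: "(('a \<Rightarrow> real) \<Rightarrow> real) \<Rightarrow> ('a \<Rightarrow> real) set \<Rightarrow> ereal" where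
  "dual_norm L D = (SUP h\<in>{h\<in>D. \<forall>x. \<bar>h x\<bar> \<le> 1}. ereal \<bar>L h\<bar>)"

definition Lfun :: "(('a \<Rightarrow> real) \<Rightarrow> ('a \<Rightarrow> real) \<Rightarrow> real) \<Rightarrow> ('a \<Rightarrow> real) \<Rightarrow> ('a \<Rightarrow> real) \<Rightarrow> real" where
  "Lfun E f h = 2 * E (\<lambda>x. f x * h x) f - E (\<lambda>x. f x ^ 2) h"

end

theory Submission
  imports Defs
begin

lemma AL:
  assumes "algebra_lattice D"
  shows AL_zero: "(\<lambda>x. 0) \<in> D"
    and AL_add: "\<And>f g. f \<in> D \<Longrightarrow> g \<in> D \<Longrightarrow> (\<lambda>x. f x + g x) \<in> D"
    and AL_scale: "\<And>f c. f \<in> D \<Longrightarrow> (\<lambda>x. c * f x) \<in> D"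
    and AL_mult: "\<And>f g. f \<in> D \<Longrightarrow> g \<in> D \<Longrightarrow> (\<lambda>x. f x * g x) \<in> D"
    and AL_max: "\<And>f g. f \<in> D \<Longrightarrow> g \<in> D \<Longrightarrow> (\<lambda>x. max (f x) (g x)) \<in> D"
  using assms unfolding algebra_lattice_def by auto

lemma AL_diff:
  assumes "algebra_lattice D" "f \<in> D" "g \<in> D"
  shows "(\<lambda>x. f x - g x) \<in> D"
proof -
  have "(\<lambda>x. f x + (-1) * g x) \<in> D"
    using assms by (intro AL_add AL_scale) auto
  then show ?thesis by simp
qed

lemma D0_aux:
  fixes n :: nat
  assumes al: "algebra_lattice D"
  shows "(\<forall>i<n. g i \<in> D0plus D) \<Longrightarrow> (\<lambda>x. \<Sum>i<n. c i * g i x) \<in> D \<and>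
     (\<exists>\<phi>\<in>D. (\<forall>x. 0 \<le> \<phi> x \<and> \<phi> x \<le> 1) \<and> (\<forall>x. (\<Sum>i<n. c i * g i x) \<noteq> 0 \<longrightarrow> \<phi> x = 1))"
proof (induction n)
  case 0
  have z: "(\<lambda>x::'a. 0::real) \<in> D" by (rule AL_zero[OF al])
  have "(\<lambda>x. \<Sum>i<(0::nat). c i * g i x) = (\<lambda>x. 0)" by simp
  then have A: "(\<lambda>x. \<Sum>i<(0::nat). c i * g i x) \<in> D" using z by simp
  have B: "(\<forall>x. 0 \<le> (0::real) \<and> (0::real) \<le> 1) \<and> (\<forall>x. (\<Sum>i<(0::nat). c i * g i x) \<noteq> 0 \<longrightarrow> (0::real) = 1)"
    by simp
  show ?case
    by (rule conjI[OF A], rule bexI[OF _ z]) (use B in simp)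
next
  case (Suc n)
  have pr: "\<forall>i<n. g i \<in> D0plus D" using Suc.prems by simp
  have IH: "(\<lambda>x. \<Sum>i<n. c i * g i x) \<in> D \<and>
     (\<exists>\<phi>\<in>D. (\<forall>x. 0 \<le> \<phi> x \<and> \<phi> x \<le> 1) \<and> (\<forall>x. (\<Sum>i<n. c i * g i x) \<noteq> 0 \<longrightarrow> \<phi> x = 1))"
    by (rule Suc.IH[OF pr])
  then have S: "(\<lambda>x. \<Sum>i<n. c i * g i x) \<in> D" by (rule conjunct1)
  from IH obtain \<phi> where phi: "\<phi> \<in> D" "\<forall>x. 0 \<le> \<phi> x \<and> \<phi> x \<le> 1"
      "\<forall>x. (\<Sum>i<n. c i * g i x) \<noteq> 0 \<longrightarrow> \<phi> x = 1"
    by blast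
  have gn: "g n \<in> D0plus D" using Suc.prems by simp
  then have gn': "g n \<in> D" "\<forall>x. g n x \<ge> 0" "E_set D (g n) \<noteq> {}"
    unfolding D0plus_def by simp_all
  then obtain \<psi> where psi1: "\<psi> \<in> E_set D (g n)" by blast
  have psi': "\<psi> \<in> D" "\<And>x. (if g n x > 0 then 1 else 0) \<le> \<psi> x \<and> \<psi> x \<le> 1"
    using psi1 unfolding E_set_def by simp_all
  have eq: "(\<lambda>x. \<Sum>i<Suc n. c i * g i x) = (\<lambda>x. (\<Sum>i<n. c i * g i x) + c n * g n x)"
    by simp
  have A: "(\<lambda>x. \<Sum>i<Suc n. c i * g i x) \<in> D"
    unfolding eq by (rule AL_add[OF al S AL_scale[OF al gn'(1)]])
  have M: "(\<lambda>x. max (\<phi> x) (\<psi> x)) \<in> D" by (rule AL_max[OF al phi(1) psi'(1)])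
  have B: "\<forall>x. 0 \<le> max (\<phi> x) (\<psi> x) \<and> max (\<phi> x) (\<psi> x) \<le> 1"
  proof
    fix x
    have "0 \<le> \<phi> x" "\<phi> x \<le> 1" "\<psi> x \<le> 1" using phi(2) psi'(2)[of x] by auto
    then show "0 \<le> max (\<phi> x) (\<psi> x) \<and> max (\<phi> x) (\<psi> x) \<le> 1" by linarith
  qed
  have C: "\<forall>x. (\<Sum>i<Suc n. c i * g i x) \<noteq> 0 \<longrightarrow> max (\<phi> x) (\<psi> x) = 1"
  proof (intro allI impI)
    fix x assume ne: "(\<Sum>i<Suc n. c i * g i x) \<noteq> 0"
    have b1: "\<phi> x \<le> 1" "\<psi> x \<le> 1" using phi(2) psi'(2)[of x] by auto
    show "max (\<phi> x) (\<psi> x) = 1"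
    proof (cases "(\<Sum>i<n. c i * g i x) = 0")
      case True
      then have "c n * g n x \<noteq> 0" using ne by simp
      then have "g n x \<noteq> 0" by auto
      moreover have "g n x \<ge> 0" using gn'(2) by blast
      ultimately have "g n x > 0" by linarith
      then have "1 \<le> \<psi> x" using psi'(2)[of x] by simp
      then show ?thesis using b1 by linarith
    next
      case False
      then have "\<phi> x = 1" using phi(3) by blast
      then show ?thesis using b1 by linarith
    qed
  qed
  show ?case
    by (rule conjI[OF A], rule bexI[OF _ M]) (use B C in simp)
qed

lemma D0_props:
  assumes al: "algebra_lattice D" and f: "f \<in> D0 D"
  shows "f \<in> D \<and> (\<exists>\<phi>\<in>D. (\<forall>x. 0 \<le> \<phi> x \<and> \<phi> x \<le> 1) \<and> (\<forall>x. f x \<noteq> 0 \<longrightarrow> \<phi> x = 1))"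
proof -
  have "\<exists>(n::nat) c g. (\<forall>i<n. g i \<in> D0plus D) \<and> f = (\<lambda>x. \<Sum>i<n. c i * g i x)"
    using f unfolding D0_def by simp
  then obtain n :: nat and c g where "\<forall>i<n. g i \<in> D0plus D" "f = (\<lambda>x. \<Sum>i<n. c i * g i x)"
    by blast
  moreover have "(\<lambda>x. \<Sum>i<n. c i * g i x) \<in> D \<and>
     (\<exists>\<phi>\<in>D. (\<forall>x. 0 \<le> \<phi> x \<and> \<phi> x \<le> 1) \<and> (\<forall>x. (\<Sum>i<n. c i * g i x) \<noteq> 0 \<longrightarrow> \<phi> x = 1))"
    using D0_aux[OF al] calculation(1) by blast
  ultimately show ?thesis by simp
qed

lemma BF:
  assumes "bilinear_form E D"
  shows BF_sym: "\<And>f g. f \<in> D \<Longrightarrow> g \<in> D \<Longrightarrow> E f g = E g f"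
    and BF_lin: "\<And>f g h a b. f \<in> D \<Longrightarrow> g \<in> D \<Longrightarrow> h \<in> D \<Longrightarrow>
        E (\<lambda>x. a * f x + b * g x) h = a * E f h + b * E g h"
  using assms unfolding bilinear_form_def by auto

lemma BF_lin2:
  assumes bf: "bilinear_form E D" and al: "algebra_lattice D"
    and "f \<in> D" "g \<in> D" "h \<in> D"
  shows "E h (\<lambda>x. a * f x + b * g x) = a * E h f + b * E h g"
proof -
  have c: "(\<lambda>x. a * f x + b * g x) \<in> D" using assms by (intro AL_add AL_scale) auto
  have "E h (\<lambda>x. a * f x + b * g x) = E (\<lambda>x. a * f x + b * g x) h"
    using BF_sym[OF bf c assms(5)] by simp
  also have "\<dots> = a * E f h + b * E g h" using BF_lin[OF bf assms(3-5)] .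
  also have "\<dots> = a * E h f + b * E h g" using BF_sym[OF bf] assms by simp
  finally show ?thesis .
qed

lemma BF_zero:
  assumes bf: "bilinear_form E D" and "h \<in> D"
  shows "E (\<lambda>x. 0) h = 0"
  using BF_lin[OF bf assms(2) assms(2) assms(2), of 0 0] by simp

lemma L_lin:
  assumes bf: "bilinear_form E D" and al: "algebra_lattice D"
    and f: "f \<in> D" and h1: "h1 \<in> D" and h2: "h2 \<in> D"
  shows "Lfun E f (\<lambda>x. a * h1 x + b * h2 x) = a * Lfun E f h1 + b * Lfun E f h2"
proof -
  have eq: "(\<lambda>x. f x * (a * h1 x + b * h2 x)) = (\<lambda>x. a * (f x * h1 x) + b * (f x * h2 x))"
    by (auto simp: algebra_simps)
  have m1: "(\<lambda>x. f x * h1 x) \<in> D" and m2: "(\<lambda>x. f x * h2 x) \<in> D"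
    using AL_mult[OF al] f h1 h2 by auto
  have g: "(\<lambda>x. f x ^ 2) \<in> D" using AL_mult[OF al f f] by (simp add: power2_eq_square)
  show ?thesis unfolding Lfun_def eq
    using BF_lin[OF bf m1 m2 f, of a b] BF_lin2[OF bf al h1 h2 g, of a b]
    by (simp add: algebra_simps)
qed

lemma L_add:
  assumes bf: "bilinear_form E D" and al: "algebra_lattice D"
    and f: "f \<in> D" and h1: "h1 \<in> D" and h2: "h2 \<in> D"
  shows "Lfun E f (\<lambda>x. h1 x + h2 x) = Lfun E f h1 + Lfun E f h2"
  using L_lin[OF assms, of 1 1] by simp

lemma L_diff:
  assumes bf: "bilinear_form E D" and al: "algebra_lattice D"
    and f: "f \<in> D" and h1: "h1 \<in> D" and h2: "h2 \<in> D"
  shows "Lfun E f (\<lambda>x. h1 x - h2 x) = Lfun E f h1 - Lfun E f h2"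
  using L_lin[OF assms, of 1 "-1"] by simp

theorem corollaryC:
  fixes D :: "('a \<Rightarrow> real) set" and E :: "('a \<Rightarrow> real) \<Rightarrow> ('a \<Rightarrow> real) \<Rightarrow> real"
  assumes "algebra_lattice D" and "stone_property D" and "bilinear_form E D"
    and "zero_killing E D"
    and "\<forall>f\<in>D0 D. positive_functional (Lfun E f) D"
    and "f \<in> D0 D"
  shows "ereal (E f f) = dual_norm (Lfun E f) D / 2"
proof -
  note al = assms(1) and bf = assms(3)
  define L where "L = Lfun E f"
  define g where "g = (\<lambda>x. f x ^ 2)"
  have pf: "positive_functional (Lfun E f) D" using assms(5,6) by blast
  have pos: "\<And>h. h \<in> D \<Longrightarrow> (\<forall>x. h x \<ge> 0) \<Longrightarrow> L h \<ge> 0"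
    using pf unfolding positive_functional_def L_def by blast
  have D0p: "f \<in> D \<and> (\<exists>\<phi>\<in>D. (\<forall>x. 0 \<le> \<phi> x \<and> \<phi> x \<le> 1) \<and> (\<forall>x. f x \<noteq> 0 \<longrightarrow> \<phi> x = 1))"
    by (rule D0_props[OF al assms(6)])
  then have fD: "f \<in> D" by blast
  from D0p obtain \<phi>0 where phi0: "\<phi>0 \<in> D" "\<forall>x. 0 \<le> \<phi>0 x \<and> \<phi>0 x \<le> 1"
    "\<forall>x. f x \<noteq> 0 \<longrightarrow> \<phi>0 x = 1"
    by blast
  have gD: "g \<in> D" unfolding g_def using AL_mult[OF al fD fD] by (simp add: power2_eq_square)
  have "\<forall>x. (if g x > 0 then 1 else 0) \<le> \<phi>0 x \<and> \<phi>0 x \<le> 1"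
  proof
    fix x
    show "(if g x > 0 then 1 else 0) \<le> \<phi>0 x \<and> \<phi>0 x \<le> 1"
    proof (cases "g x > 0")
      case True
      then have "f x \<noteq> 0" unfolding g_def by auto
      then have "\<phi>0 x = 1" using phi0(3) by blast
      then show ?thesis using True by simp
    next
      case False
      then show ?thesis using phi0(2) by simp
    qed
  qed
  then have "\<phi>0 \<in> E_set D g" unfolding E_set_def using phi0(1) by blast
  moreover have "\<forall>x. g x \<ge> 0" unfolding g_def by simp
  ultimately have gD0: "g \<in> D0plus D" unfolding D0plus_def using gD by blast
  have INF0: "(INF \<phi>\<in>E_set D g. ereal (E g \<phi>)) = 0"
    using assms(4) gD0 unfolding zero_killing_def by blast
  have Epos: "\<And>\<psi>. \<psi> \<in> E_set D g \<Longrightarrow> E g \<psi> \<ge> 0"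
  proof -
    fix \<psi> assume "\<psi> \<in> E_set D g"
    then have "(INF \<phi>\<in>E_set D g. ereal (E g \<phi>)) \<le> ereal (E g \<psi>)" by (rule INF_lower)
    then show "E g \<psi> \<ge> 0" using INF0 by simp
  qed
  have Esmall: "\<And>e. e > 0 \<Longrightarrow> \<exists>\<phi>\<in>E_set D g. E g \<phi> < e"
  proof -
    fix e :: real assume "e > 0"
    then have "(INF \<phi>\<in>E_set D g. ereal (E g \<phi>)) < ereal e" using INF0 by simp
    then show "\<exists>\<phi>\<in>E_set D g. E g \<phi> < e" by (simp add: INF_less_iff)
  qed
  have Eset: "\<And>\<phi>. \<phi> \<in> E_set D g \<Longrightarrow> \<phi> \<in> D \<and> (\<forall>x. 0 \<le> \<phi> x \<and> \<phi> x \<le> 1) \<and> (\<forall>x. f x \<noteq> 0 \<longrightarrow> \<phi> x = 1)"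
  proof -
    fix \<phi> assume a: "\<phi> \<in> E_set D g"
    have b: "\<And>x. (if g x > 0 then 1 else 0) \<le> \<phi> x \<and> \<phi> x \<le> 1" and c: "\<phi> \<in> D"
      using a unfolding E_set_def by auto
    have gp: "\<And>x. f x \<noteq> 0 \<Longrightarrow> g x > 0" unfolding g_def by simp
    have d: "\<forall>x. 0 \<le> \<phi> x \<and> \<phi> x \<le> 1"
    proof
      fix x
      show "0 \<le> \<phi> x \<and> \<phi> x \<le> 1" using b[of x] by (cases "g x > 0") auto
    qed
    have e: "\<forall>x. f x \<noteq> 0 \<longrightarrow> \<phi> x = 1"
    proof (intro allI impI)
      fix x assume "f x \<noteq> 0"
      then have "g x > 0" by (rule gp)
      then show "\<phi> x = 1" using b[of x] by simp
    qed
    show "\<phi> \<in> D \<and> (\<forall>x. 0 \<le> \<phi> x \<and> \<phi> x \<le> 1) \<and> (\<forall>x. f x \<noteq> 0 \<longrightarrow> \<phi> x = 1)"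
      using c d e by blast
  qed
  have Lphi: "\<And>\<phi>. \<phi> \<in> E_set D g \<Longrightarrow> L \<phi> = 2 * E f f - E g \<phi>"
  proof -
    fix \<phi> assume "\<phi> \<in> E_set D g"
    then have "\<forall>x. f x \<noteq> 0 \<longrightarrow> \<phi> x = 1" using Eset by blast
    then have "(\<lambda>x. f x * \<phi> x) = f"
    proof -
      assume a: "\<forall>x. f x \<noteq> 0 \<longrightarrow> \<phi> x = 1"
      show ?thesis
      proof
        fix x show "f x * \<phi> x = f x" using a by (cases "f x = 0") auto
      qed
    qed
    then show "L \<phi> = 2 * E f f - E g \<phi>" unfolding L_def Lfun_def g_def by simp
  qed
  have Lk: "\<And>k. k \<in> D \<Longrightarrow> (\<forall>x. f x \<noteq> 0 \<longrightarrow> k x = 0) \<Longrightarrow> L k = - E g k"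
  proof -
    fix k assume k: "k \<in> D" "\<forall>x. f x \<noteq> 0 \<longrightarrow> k x = 0"
    then have "(\<lambda>x. f x * k x) = (\<lambda>x. 0)"
    proof -
      show ?thesis
      proof
        fix x show "f x * k x = 0" using k by (cases "f x = 0") auto
      qed
    qed
    then show "L k = - E g k" unfolding L_def Lfun_def g_def using BF_zero[OF bf fD] by simp
  qed
  have kbound: "\<And>\<phi> k. \<phi> \<in> E_set D g \<Longrightarrow> k \<in> D \<Longrightarrow> (\<forall>x. 0 \<le> k x \<and> \<phi> x + k x \<le> 1) \<Longrightarrow>
      (\<forall>x. f x \<noteq> 0 \<longrightarrow> k x = 0) \<Longrightarrow> - E g \<phi> \<le> E g k \<and> E g k \<le> 0"
  proof -
    fix \<phi> k assume ph: "\<phi> \<in> E_set D g" and k: "k \<in> D" "\<forall>x. 0 \<le> k x \<and> \<phi> x + k x \<le> 1"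
      "\<forall>x. f x \<noteq> 0 \<longrightarrow> k x = 0"
    have "\<forall>x. k x \<ge> 0" using k(2) by blast
    then have "L k \<ge> 0" using pos k(1) by blast
    moreover have "L k = - E g k" using Lk k(1) k(3) by blast
    ultimately have le: "E g k \<le> 0" by linarith
    have phD: "\<phi> \<in> D" using Eset ph by blast
    have "(\<lambda>x. \<phi> x + k x) \<in> E_set D g"
    proof -
      have "\<forall>x. (if g x > 0 then 1 else 0) \<le> \<phi> x + k x \<and> \<phi> x + k x \<le> 1"
      proof
        fix x
        have "(if g x > 0 then 1 else 0) \<le> \<phi> x" using ph unfolding E_set_def by auto
        then show "(if g x > 0 then 1 else 0) \<le> \<phi> x + k x \<and> \<phi> x + k x \<le> 1"
          using k(2)[rule_format, of x] by linarith
      qed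
      then show ?thesis using AL_add[OF al phD k(1)] unfolding E_set_def by blast
    qed
    then have "E g (\<lambda>x. \<phi> x + k x) \<ge> 0" by (rule Epos)
    moreover have "E g (\<lambda>x. \<phi> x + k x) = E g \<phi> + E g k"
      using BF_lin2[OF bf al phD k(1) gD, of 1 1] by simp
    ultimately show "- E g \<phi> \<le> E g k \<and> E g k \<le> 0" using le by simp
  qed
  have upper: "\<And>h. h \<in> D \<Longrightarrow> (\<forall>x. \<bar>h x\<bar> \<le> 1) \<Longrightarrow> \<bar>L h\<bar> \<le> 2 * E f f"
  proof -
    fix h assume hD: "h \<in> D" and hb: "\<forall>x. \<bar>h x\<bar> \<le> 1"
    show "\<bar>L h\<bar> \<le> 2 * E f f"
    proof (rule field_le_epsilon)
      fix e :: real assume "e > 0"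
      then obtain \<phi> where ph: "\<phi> \<in> E_set D g" "E g \<phi> < e/2"
        using Esmall[of "e/2"] by auto
      have phD: "\<phi> \<in> D" and phb: "\<forall>x. 0 \<le> \<phi> x \<and> \<phi> x \<le> 1"
        and ph1: "\<forall>x. f x \<noteq> 0 \<longrightarrow> \<phi> x = 1" using Eset[OF ph(1)] by auto
      have Eg0: "E g \<phi> \<ge> 0" using Epos[OF ph(1)] .
      define hp where "hp = (\<lambda>x. max (h x) 0)"
      define hm where "hm = (\<lambda>x. max (- h x) 0)"
      have hpD: "hp \<in> D" unfolding hp_def using AL_max[OF al hD AL_zero[OF al]] .
      have "(\<lambda>x. (-1) * h x) \<in> D" using AL_scale[OF al hD] .
      then have hmD: "hm \<in> D" unfolding hm_def using AL_max[OF al _ AL_zero[OF al]] by simp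
      define kp where "kp = (\<lambda>x. hp x - hp x * \<phi> x)"
      define km where "km = (\<lambda>x. hm x - hm x * \<phi> x)"
      define h\<phi> where "h\<phi> = (\<lambda>x. h x * \<phi> x)"
      have kpD: "kp \<in> D" unfolding kp_def by (intro AL_diff[OF al hpD] AL_mult[OF al hpD phD])
      have kmD: "km \<in> D" unfolding km_def by (intro AL_diff[OF al hmD] AL_mult[OF al hmD phD])
      have hphD: "h\<phi> \<in> D" unfolding h\<phi>_def by (rule AL_mult[OF al hD phD])
      have kpb: "\<forall>x. 0 \<le> kp x \<and> \<phi> x + kp x \<le> 1"
      proof
        fix x
        have a: "0 \<le> hp x" "hp x \<le> 1" using hb[rule_format, of x] unfolding hp_def by auto
        have "kp x = hp x * (1 - \<phi> x)" unfolding kp_def by (simp add: algebra_simps)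
        moreover have "hp x * (1 - \<phi> x) \<le> 1 * (1 - \<phi> x)"
          using a phb[rule_format, of x] by (intro mult_right_mono) auto
        ultimately show "0 \<le> kp x \<and> \<phi> x + kp x \<le> 1" using a phb[rule_format, of x] by auto
      qed
      have kmb: "\<forall>x. 0 \<le> km x \<and> \<phi> x + km x \<le> 1"
      proof
        fix x
        have a: "0 \<le> hm x" "hm x \<le> 1" using hb[rule_format, of x] unfolding hm_def by auto
        have "km x = hm x * (1 - \<phi> x)" unfolding km_def by (simp add: algebra_simps)
        moreover have "hm x * (1 - \<phi> x) \<le> 1 * (1 - \<phi> x)"
          using a phb[rule_format, of x] by (intro mult_right_mono) auto
        ultimately show "0 \<le> km x \<and> \<phi> x + km x \<le> 1" using a phb[rule_format, of x] by auto
      qed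
      have kp0: "\<forall>x. f x \<noteq> 0 \<longrightarrow> kp x = 0" using ph1 unfolding kp_def by auto
      have km0: "\<forall>x. f x \<noteq> 0 \<longrightarrow> km x = 0" using ph1 unfolding km_def by auto
      have Ekp: "\<bar>E g kp\<bar> \<le> e/2" using kbound[OF ph(1) kpD kpb kp0] ph(2) Eg0 unfolding abs_le_iff by linarith
      have Ekm: "\<bar>E g km\<bar> \<le> e/2" using kbound[OF ph(1) kmD kmb km0] ph(2) Eg0 unfolding abs_le_iff by linarith
      have hdec: "h = (\<lambda>x. (h\<phi> x + kp x) - km x)"
      proof
        fix x
        have pm: "hp x - hm x = h x" unfolding hp_def hm_def by (auto simp: max_def)
        have "h\<phi> x + kp x - km x = h x * \<phi> x + (hp x - hm x) * (1 - \<phi> x)"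
          unfolding h\<phi>_def kp_def km_def by (simp add: algebra_simps)
        also have "\<dots> = h x" unfolding pm by (simp add: algebra_simps)
        finally show "h x = h\<phi> x + kp x - km x" by simp
      qed
      have sumD: "(\<lambda>x. h\<phi> x + kp x) \<in> D" by (rule AL_add[OF al hphD kpD])
      have "L h = L (\<lambda>x. (h\<phi> x + kp x) - km x)" by (rule arg_cong[OF hdec])
      also have "\<dots> = L (\<lambda>x. h\<phi> x + kp x) - L km"
        unfolding L_def by (rule L_diff[OF bf al fD sumD kmD])
      also have "\<dots> = L h\<phi> + L kp - L km"
        unfolding L_def using L_add[OF bf al fD hphD kpD] by simp
      also have "\<dots> = L h\<phi> - E g kp + E g km" using Lk kpD kmD kp0 km0 by simp
      finally have Lh: "L h = L h\<phi> - E g kp + E g km" .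
      have s1: "(\<lambda>x. \<phi> x - h\<phi> x) \<in> D" "(\<lambda>x. \<phi> x + h\<phi> x) \<in> D"
        using AL_diff[OF al phD hphD] AL_add[OF al phD hphD] by auto
      have "\<forall>x. \<phi> x - h\<phi> x \<ge> 0" "\<forall>x. \<phi> x + h\<phi> x \<ge> 0"
      proof -
        have "\<And>x. \<bar>h\<phi> x\<bar> \<le> \<phi> x"
        proof -
          fix x
          have "\<bar>h\<phi> x\<bar> = \<bar>h x\<bar> * \<phi> x" unfolding h\<phi>_def using phb by (simp add: abs_mult)
          also have "\<dots> \<le> 1 * \<phi> x" using hb phb by (intro mult_right_mono) auto
          finally show "\<bar>h\<phi> x\<bar> \<le> \<phi> x" by simp
        qed
        then have hb2: "\<bar>h\<phi> x\<bar> \<le> \<phi> x" for x .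
        have "\<phi> x - h\<phi> x \<ge> 0 \<and> \<phi> x + h\<phi> x \<ge> 0" for x
          using hb2[of x] unfolding abs_le_iff by linarith
        then show "\<forall>x. \<phi> x - h\<phi> x \<ge> 0" "\<forall>x. \<phi> x + h\<phi> x \<ge> 0" by auto
      qed
      then have "L (\<lambda>x. \<phi> x - h\<phi> x) \<ge> 0" "L (\<lambda>x. \<phi> x + h\<phi> x) \<ge> 0" using pos s1 by auto
      then have "L \<phi> - L h\<phi> \<ge> 0" "L \<phi> + L h\<phi> \<ge> 0"
        unfolding L_def using L_diff[OF bf al fD phD hphD] L_add[OF bf al fD phD hphD] by auto
      then have "\<bar>L h\<phi>\<bar> \<le> L \<phi>" unfolding abs_le_iff by linarith
      also have "\<dots> \<le> 2 * E f f" using Lphi[OF ph(1)] Eg0 by simp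
      finally have "\<bar>L h\<phi>\<bar> \<le> 2 * E f f" .
      then show "\<bar>L h\<bar> \<le> 2 * E f f + e" using Lh Ekp Ekm unfolding abs_le_iff by linarith
    qed
  qed
  have DN: "dual_norm L D = ereal (2 * E f f)"
    unfolding dual_norm_def
  proof (rule antisym)
    show "(SUP h\<in>{h \<in> D. \<forall>x. \<bar>h x\<bar> \<le> 1}. ereal \<bar>L h\<bar>) \<le> ereal (2 * E f f)"
      using upper by (intro SUP_least) auto
    show "ereal (2 * E f f) \<le> (SUP h\<in>{h \<in> D. \<forall>x. \<bar>h x\<bar> \<le> 1}. ereal \<bar>L h\<bar>)"
    proof (rule ereal_le_epsilon2)
      fix e :: real assume "e > 0"
      then obtain \<phi> where ph: "\<phi> \<in> E_set D g" "E g \<phi> < e"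
        using Esmall by auto
      have "\<phi> \<in> {h \<in> D. \<forall>x. \<bar>h x\<bar> \<le> 1}" using Eset[OF ph(1)] by auto
      then have "ereal \<bar>L \<phi>\<bar> \<le> (SUP h\<in>{h \<in> D. \<forall>x. \<bar>h x\<bar> \<le> 1}. ereal \<bar>L h\<bar>)"
        by (rule SUP_upper)
      moreover have "2 * E f f \<le> \<bar>L \<phi>\<bar> + e" using Lphi[OF ph(1)] ph(2) by auto
      ultimately show "ereal (2 * E f f) \<le> (SUP h\<in>{h \<in> D. \<forall>x. \<bar>h x\<bar> \<le> 1}. ereal \<bar>L h\<bar>) + ereal e"
      proof -
        have "ereal (2 * E f f) \<le> ereal (\<bar>L \<phi>\<bar> + e)" using \<open>2 * E f f \<le> \<bar>L \<phi>\<bar> + e\<close> by simp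
        also have "\<dots> = ereal \<bar>L \<phi>\<bar> + ereal e" by simp
        also have "\<dots> \<le> (SUP h\<in>{h \<in> D. \<forall>x. \<bar>h x\<bar> \<le> 1}. ereal \<bar>L h\<bar>) + ereal e"
          using \<open>ereal \<bar>L \<phi>\<bar> \<le> _\<close> by (rule add_right_mono)
        finally show ?thesis .
      qed
    qed
  qed
  show ?thesis using DN unfolding L_def by simp
qed

end
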